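(* Let $F\subsetneq K$ be fields of characteristic $0$, with $F$ a proper nonempty subfield of $K$. Let $p(x)=\sum_{k=0}^{n}a_k x^k\in K[x]$ with $a_n\neq 0$, and $q(x)=\sum_{j=0}^{m}b_j x^j\in K[x]$ with $b_m\neq 0$ and $b_0,b_m\in F$. Suppose $p\circ q\in F[x]$. Then $p\in F[x]$ or $q\in F[x]$. Moreover, if $p\circ q$ is not constant, then $p\in F[x]$ and $q\in F[x]$.
   Context: $F[x]$ denotes the set of polynomials with all coefficients in $F$. *)

theory Defs
  imports "HOL-Computational_Algebra.Polynomial"
begin

definition subfield :: "'a::field set \<Rightarrow> bool" where
  "subfield F \<longleftrightarrow> 0 \<in> F \<and> 1 \<in> F \<and>
     (\<forall>x\<in>F. \<forall>y\<in>F. x + y \<in> F \<and> x * y \<in> F) \<and>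
     (\<forall>x\<in>F. - x \<in> F \<and> inverse x \<in> F)"

definition poly_over :: "'a::zero set \<Rightarrow> 'a poly \<Rightarrow> bool" where
  "poly_over F p \<longleftrightarrow> (\<forall>i. coeff p i \<in> F)"

end

theory Submission
  imports Defs
begin

lemma sf_basic:
  assumes "subfield F"
  shows sf_0: "0 \<in> F" and sf_1: "1 \<in> F"
    and sf_add: "x \<in> F \<Longrightarrow> y \<in> F \<Longrightarrow> x + y \<in> F"
    and sf_mult: "x \<in> F \<Longrightarrow> y \<in> F \<Longrightarrow> x * y \<in> F"
    and sf_uminus: "x \<in> F \<Longrightarrow> - x \<in> F"
    and sf_inverse: "x \<in> F \<Longrightarrow> inverse x \<in> F"
  using assms unfolding subfield_def by auto

lemma sf_diff: "subfield F \<Longrightarrow> x \<in> F \<Longrightarrow> y \<in> F \<Longrightarrow> x - y \<in> F"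
  using sf_add[of F x "-y"] sf_uminus[of F y] by simp

lemma sf_divide: "subfield F \<Longrightarrow> x \<in> F \<Longrightarrow> y \<in> F \<Longrightarrow> x / y \<in> F"
  using sf_mult[of F x "inverse y"] sf_inverse[of F y] by (simp add: divide_inverse)

lemma sf_power: "subfield F \<Longrightarrow> x \<in> F \<Longrightarrow> x ^ n \<in> F"
  by (induction n) (auto intro: sf_1 sf_mult)

lemma sf_of_nat: "subfield F \<Longrightarrow> of_nat n \<in> F"
  by (induction n) (auto intro: sf_0 sf_1 sf_add)

lemma sf_sum: "subfield F \<Longrightarrow> (\<And>i. i \<in> A \<Longrightarrow> f i \<in> F) \<Longrightarrow> sum f A \<in> F"
  by (induction A rule: infinite_finite_induct) (auto intro: sf_0 sf_add)

lemma po_add: "subfield F \<Longrightarrow> poly_over F a \<Longrightarrow> poly_over F b \<Longrightarrow> poly_over F (a + b)"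
  unfolding poly_over_def by (auto intro: sf_add)

lemma po_diff: "subfield F \<Longrightarrow> poly_over F a \<Longrightarrow> poly_over F b \<Longrightarrow> poly_over F (a - b)"
  unfolding poly_over_def by (auto intro: sf_diff)

lemma po_mult: "subfield F \<Longrightarrow> poly_over F a \<Longrightarrow> poly_over F b \<Longrightarrow> poly_over F (a * b)"
  unfolding poly_over_def coeff_mult by (auto intro!: sf_sum sf_mult)

lemma po_const: "subfield F \<Longrightarrow> c \<in> F \<Longrightarrow> poly_over F [:c:]"
  unfolding poly_over_def by (auto simp: coeff_pCons split: nat.splits intro: sf_0)

lemma po_monom: "subfield F \<Longrightarrow> c \<in> F \<Longrightarrow> poly_over F (monom c n)"
  unfolding poly_over_def by (auto simp: coeff_monom intro: sf_0)

lemma po_one: "subfield F \<Longrightarrow> poly_over F 1"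
  unfolding poly_over_def by (auto simp: coeff_1 intro: sf_0 sf_1)

lemma po_power: "subfield F \<Longrightarrow> poly_over F a \<Longrightarrow> poly_over F (a ^ n)"
  by (induction n) (auto intro: po_mult po_one)

lemma coeff_mult_bound:
  fixes a c :: "'a::comm_semiring_1 poly"
  assumes "degree a \<le> A" "degree c \<le> C"
  shows "coeff (a * c) (A + C) = coeff a A * coeff c C"
proof -
  have "coeff (a * c) (A + C) = (\<Sum>i\<le>A+C. coeff a i * coeff c (A + C - i))"
    by (rule coeff_mult)
  also have "\<dots> = coeff a A * coeff c (A + C - A) + (\<Sum>i\<in>{..A+C}-{A}. coeff a i * coeff c (A + C - i))"
    by (subst sum.remove[of _ A]) auto
  also have "(\<Sum>i\<in>{..A+C}-{A}. coeff a i * coeff c (A + C - i)) = 0"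
  proof (rule sum.neutral, rule ballI)
    fix i assume "i \<in> {..A+C} - {A}"
    then have "i \<noteq> A" by auto
    show "coeff a i * coeff c (A + C - i) = 0"
    proof (cases "i < A")
      case True
      then have "coeff c (A + C - i) = 0" using assms(2) by (intro coeff_eq_0) auto
      then show ?thesis by simp
    next
      case False
      then have "coeff a i = 0" using assms(1) \<open>i \<noteq> A\<close> by (intro coeff_eq_0) auto
      then show ?thesis by simp
    qed
  qed
  finally show ?thesis by simp
qed
lemma pow_lead:
  fixes u :: "'a::comm_semiring_1 poly"
  assumes "degree u \<le> m"
  shows "degree (u ^ n) \<le> n * m \<and> coeff (u ^ n) (n * m) = coeff u m ^ n"
proof (induction n)
  case 0
  then show ?case by simp
next
  case (Suc n)
  have d: "degree (u ^ Suc n) \<le> Suc n * m"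
    using degree_mult_le[of u "u^n"] Suc assms by simp
  have "coeff (u * u ^ n) (m + n * m) = coeff u m * coeff (u ^ n) (n * m)"
    using Suc assms by (intro coeff_mult_bound) auto
  then show ?case using d Suc by (simp add: add.commute)
qed

lemma pow_expand:
  fixes u v :: "'a::comm_ring_1 poly"
  assumes "degree u \<le> m" "degree v \<le> j" "j < m" "n \<ge> 1"
  shows "degree ((u+v)^n - u^n) \<le> (n-1)*m + j \<and>
         coeff ((u+v)^n - u^n) ((n-1)*m + j) = of_nat n * coeff u m ^ (n-1) * coeff v j"
  using assms(4)
proof (induction n)
  case 0
  then show ?case by simp
next
  case (Suc n)
  show ?case
  proof (cases "n = 0")
    case True
    then show ?thesis using assms by simp
  next
    case False
    define D where "D = (u+v)^n - u^n"
    from Suc.IH False have IH: "degree D \<le> (n-1)*m + j"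
       "coeff D ((n-1)*m + j) = of_nat n * coeff u m ^ (n-1) * coeff v j"
      unfolding D_def by auto
    have eq: "(u+v)^Suc n - u^Suc n = D*u + D*v + u^n*v"
      unfolding D_def by (simp add: algebra_simps)
    have pl: "degree (u ^ n) \<le> n * m" "coeff (u ^ n) (n * m) = coeff u m ^ n"
      using pow_lead[OF assms(1)] by auto
    have d1: "degree (D*u) \<le> n*m + j"
    proof -
      have "(n-1)*m + j + m = n*m+j" using False by (cases n) auto
      then show ?thesis using degree_mult_le[of D u] IH assms by linarith
    qed
    have d2: "degree (D*v) < n*m + j"
    proof -
      have "degree (D*v) \<le> (n-1)*m + j + j" using degree_mult_le[of D v] IH assms by linarith
      also have "\<dots> < n*m + j" using assms False by (cases n) auto
      finally show ?thesis .
    qed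
    have d3: "degree (u^n*v) \<le> n*m + j"
      using degree_mult_le[of "u^n" v] pl assms by linarith
    have c1: "coeff (D*u) (n*m + j) = coeff D ((n-1)*m + j) * coeff u m"
    proof -
      have "n*m + j = ((n-1)*m + j) + m" using False by (cases n) auto
      then show ?thesis using coeff_mult_bound[OF IH(1) assms(1)] by (simp only:)
    qed
    have c2: "coeff (D*v) (n*m + j) = 0" using d2 by (intro coeff_eq_0) auto
    have c3: "coeff (u^n*v) (n*m + j) = coeff u m ^ n * coeff v j"
      using coeff_mult_bound[OF pl(1) assms(2)] pl(2) by simp
    have "degree ((u+v)^Suc n - u^Suc n) \<le> n*m + j"
      unfolding eq using d1 d2 d3
      by (meson degree_add_le less_imp_le)
    moreover have "coeff ((u+v)^Suc n - u^Suc n) (n*m + j) = of_nat (Suc n) * coeff u m ^ n * coeff v j"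
    proof -
      define B where "B = coeff u m"
      define c where "c = coeff v j"
      have e: "B ^ (n-1) * B = B ^ n" using False
        by (metis Suc_pred' not_gr_zero power_Suc2)
      have e2: "of_nat n * B^(n-1) * c * B = of_nat n * c * B^n"
        by (simp flip: e add: ac_simps)
      have "coeff ((u+v)^Suc n - u^Suc n) (n*m + j) = coeff (D*u) (n*m + j) + coeff (D*v) (n*m + j) + coeff (u^n*v) (n*m + j)"
        by (simp only: eq coeff_add)
      also have "\<dots> = of_nat n * B^(n-1) * c * B + 0 + B^n * c"
        using c1 c2 c3 IH(2) B_def c_def by simp
      also have "\<dots> = of_nat (Suc n) * B ^ n * c"
        unfolding e2 by (simp add: algebra_simps)
      finally show ?thesis unfolding B_def c_def .
    qed
    ultimately show ?thesis by simp
  qed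
qed

lemma pcompose_monom': "pcompose (monom a n) q = [:a:] * q ^ n"
  by (induction n) (simp_all add: monom_0 monom_Suc pcompose_pCons algebra_simps)

lemma deg_minus_monom:
  assumes "degree p = n" "n \<ge> 1"
  shows "degree (p - monom (lead_coeff p) n) \<le> n - 1"
proof (rule degree_le, intro allI impI)
  fix i assume "n - 1 < i"
  then show "coeff (p - monom (lead_coeff p) n) i = 0"
    using assms by (cases "i = n") (auto simp: coeff_monom coeff_eq_0)
qed

lemma decomp:
  fixes p q :: "'a::comm_ring_1 poly"
  assumes "degree p = n" "n \<ge> 1"
  shows "pcompose p q = [:lead_coeff p:] * q ^ n + pcompose (p - monom (lead_coeff p) n) q"
    "degree (pcompose (p - monom (lead_coeff p) n) q) \<le> (n - 1) * degree q"
proof -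
  show "pcompose p q = [:lead_coeff p:] * q ^ n + pcompose (p - monom (lead_coeff p) n) q"
    by (simp add: pcompose_diff pcompose_monom')
  show "degree (pcompose (p - monom (lead_coeff p) n) q) \<le> (n - 1) * degree q"
    using degree_pcompose_le[of "p - monom (lead_coeff p) n" q] deg_minus_monom[OF assms]
    by (meson le_trans mult_le_mono1)
qed

lemma lead_in_F:
  fixes p q :: "'a::field_char_0 poly"
  assumes F: "subfield F" and r: "poly_over F (pcompose p q)" and "degree q \<ge> 1"
    and b: "lead_coeff q \<in> F"
  shows "lead_coeff p \<in> F"
proof -
  have "lead_coeff (pcompose p q) = lead_coeff p * lead_coeff q ^ degree p"
    using assms by (intro lead_coeff_comp) auto
  moreover have "lead_coeff q \<noteq> 0" using assms by auto
  ultimately have "lead_coeff p = lead_coeff (pcompose p q) / lead_coeff q ^ degree p"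
    by simp
  then show ?thesis using r b F unfolding poly_over_def by (metis sf_divide sf_power)
qed

lemma part_p:
  fixes p q :: "'a::field_char_0 poly"
  assumes F: "subfield F" and q: "poly_over F q" and dq: "degree q \<ge> 1"
    and b: "lead_coeff q \<in> F"
  shows "poly_over F (pcompose p q) \<Longrightarrow> poly_over F p"
proof (induction "degree p" arbitrary: p rule: less_induct)
  case less
  show ?case
  proof (cases "degree p = 0")
    case True
    then obtain c where c: "p = [:c:]" by (meson degree_eq_zeroE)
    then have "coeff (pcompose p q) 0 = c" by simp
    then have "c \<in> F" using less.prems unfolding poly_over_def by metis
    then show ?thesis using c po_const[OF F] by simp
  next
    case False
    define n where "n = degree p"
    define a where "a = lead_coeff p"
    define p' where "p' = p - monom a n"
    have n1: "n \<ge> 1" using False n_def by simp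
    have aF: "a \<in> F" unfolding a_def using lead_in_F[OF F less.prems dq b] .
    have dec: "pcompose p q = [:a:] * q ^ n + pcompose p' q"
      using decomp[of p n q] n1 unfolding n_def a_def p'_def by auto
    have "degree p' < degree p" using deg_minus_monom[of p n] n1 unfolding n_def a_def p'_def
      by simp
    moreover have "poly_over F (pcompose p' q)"
    proof -
      have "pcompose p' q = pcompose p q - [:a:] * q ^ n" using dec by simp
      then show ?thesis using less.prems po_diff[OF F] po_mult[OF F] po_const[OF F aF] po_power[OF F q]
        by metis
    qed
    ultimately have "poly_over F p'" using less.hyps by blast
    moreover have "p = p' + monom a n" unfolding p'_def by simp
    ultimately show ?thesis using po_add[OF F] po_monom[OF F aF] by metis
  qed
qed

lemma solve_lin:
  fixes a d R U c :: "'a::field"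
  assumes "a \<noteq> 0" "R = a * (U + d * c)" "d \<noteq> 0"
  shows "c = (R / a - U) / d"
  using assms by (simp add: field_simps)

lemma part_q:
  fixes p q :: "'a::field_char_0 poly"
  assumes F: "subfield F" and r: "poly_over F (pcompose p q)"
    and dp: "degree p \<ge> 1" and dq: "degree q \<ge> 1"
    and b: "lead_coeff q \<in> F" and q0: "coeff q 0 \<in> F"
  shows "poly_over F q"
proof -
  define n where "n = degree p"
  define m where "m = degree q"
  define a where "a = lead_coeff p"
  define B where "B = lead_coeff q"
  have n1: "n \<ge> 1" and m1: "m \<ge> 1" using dp dq n_def m_def by auto
  have aF: "a \<in> F" unfolding a_def using lead_in_F[OF F r dq b] .
  have a0: "a \<noteq> 0" using dp unfolding a_def by auto
  have B0: "B \<noteq> 0" using dq unfolding B_def by auto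
  have BF: "B \<in> F" using b B_def by simp
  have dec: "pcompose p q = [:a:] * q ^ n + pcompose (p - monom a n) q"
    "degree (pcompose (p - monom a n) q) \<le> (n - 1) * m"
    using decomp[of p n q] n1 unfolding n_def a_def m_def by auto
  have key: "coeff (pcompose p q) ((n-1)*m + j) = a * coeff (q ^ n) ((n-1)*m + j)"
    if "j \<ge> 1" for j
  proof -
    have "coeff (pcompose (p - monom a n) q) ((n-1)*m + j) = 0"
      using dec(2) that by (intro coeff_eq_0) auto
    then show ?thesis by (subst dec(1)) simp
  qed
  have step: "coeff q j \<in> F" if j1: "j \<ge> 1" and jm: "j < m" and hi: "\<And>i. i > j \<Longrightarrow> coeff q i \<in> F" for j
  proof -
    define v where "v = poly_cutoff (j+1) q"
    define u where "u = q - v"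
    have cu: "coeff u i = (if i < j + 1 then 0 else coeff q i)" for i
      unfolding u_def v_def by (simp add: coeff_poly_cutoff)
    have dv: "degree v \<le> j"
      unfolding v_def by (rule degree_le) (simp add: coeff_poly_cutoff)
    have du: "degree u \<le> m"
      by (rule degree_le) (auto simp: cu m_def coeff_eq_0)
    have um: "coeff u m = B" using jm by (simp add: cu B_def m_def)
    have uF: "poly_over F u" unfolding poly_over_def cu using hi sf_0[OF F] by auto
    have vj: "coeff v j = coeff q j" unfolding v_def by (simp add: coeff_poly_cutoff)
    have quv: "q = u + v" unfolding u_def by simp
    have pe: "coeff (q^n - u^n) ((n-1)*m + j) = of_nat n * B ^ (n-1) * coeff q j"
      using pow_expand[OF du dv jm n1] unfolding quv[symmetric] um vj by simp
    define K where "K = (n-1)*m + j"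
    have "coeff (pcompose p q) K = a * (coeff (u^n) K + of_nat n * B ^ (n-1) * coeff q j)"
      using key[OF j1] pe unfolding K_def by (simp add: algebra_simps)
    then have eq: "coeff q j = (coeff (pcompose p q) K / a - coeff (u^n) K) / (of_nat n * B ^ (n-1))"
    proof (rule solve_lin[OF a0])
      show "of_nat n * B ^ (n-1) \<noteq> 0" using B0 n1 by simp
    qed
    have "coeff (pcompose p q) K \<in> F" using r unfolding poly_over_def by simp
    moreover have "coeff (u^n) K \<in> F" using po_power[OF F uF] unfolding poly_over_def by simp
    ultimately show ?thesis unfolding eq
      by (intro sf_divide[OF F] sf_diff[OF F] sf_mult[OF F] sf_of_nat[OF F] sf_power[OF F] aF BF)
  qed
  have "\<forall>j. m - d \<le> j \<longrightarrow> coeff q j \<in> F" for d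
  proof (induction d)
    case 0
    show ?case
    proof (intro allI impI)
      fix j assume "m - 0 \<le> j"
      then show "coeff q j \<in> F"
        using BF sf_0[OF F] by (cases "j = m") (auto simp: B_def m_def coeff_eq_0)
    qed
  next
    case (Suc d)
    show ?case
    proof (intro allI impI)
      fix j assume j: "m - Suc d \<le> j"
      show "coeff q j \<in> F"
      proof (cases "m - d \<le> j")
        case True then show ?thesis using Suc.IH by blast
      next
        case False
        then have jm: "j < m" and hi: "\<And>i. i > j \<Longrightarrow> coeff q i \<in> F"
          using j Suc.IH by auto
        show ?thesis
        proof (cases "j = 0")
          case True then show ?thesis using q0 by simp
        next
          case False then show ?thesis using step[OF _ jm hi] by simp
        qed
      qed
    qed
  qed
  then show ?thesis unfolding poly_over_def
  proof (intro allI)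
    fix i assume "\<And>d. \<forall>j. m - d \<le> j \<longrightarrow> coeff q j \<in> F"
    from this[of m] show "coeff q i \<in> F" by simp
  qed
qed

theorem theorem13:
  fixes F :: "'a::field_char_0 set" and p q :: "'a poly"
  assumes "subfield F" and "F \<noteq> UNIV"
    and "p \<noteq> 0" and "q \<noteq> 0"
    and "coeff q 0 \<in> F" and "lead_coeff q \<in> F"
    and "poly_over F (pcompose p q)"
  shows "(poly_over F p \<or> poly_over F q) \<and>
         (degree (pcompose p q) > 0 \<longrightarrow> poly_over F p \<and> poly_over F q)"
proof (cases "degree q = 0")
  case True
  then obtain c where c: "q = [:c:]" by (meson degree_eq_zeroE)
  then have "poly_over F q" using assms(5) po_const[OF assms(1)] by simp
  moreover have "degree (pcompose p q) = 0" using True by (simp add: degree_pcompose)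
  ultimately show ?thesis by simp
next
  case dq: False
  show ?thesis
  proof (cases "degree p = 0")
    case True
    then obtain c where c: "p = [:c:]" by (meson degree_eq_zeroE)
    then have "coeff (pcompose p q) 0 = c" by simp
    then have "c \<in> F" using assms(7) unfolding poly_over_def by metis
    then have "poly_over F p" using c po_const[OF assms(1)] by simp
    moreover have "degree (pcompose p q) = 0" using True by (simp add: degree_pcompose)
    ultimately show ?thesis by simp
  next
    case False
    have qF: "poly_over F q"
      using part_q[OF assms(1) assms(7) _ _ assms(6) assms(5)] False dq by simp
    have pF: "poly_over F p"
      using part_p[OF assms(1) qF _ assms(6) assms(7)] dq by simp
    show ?thesis using pF qF by simp
  qed
qed

end
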